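(* Let $G_{\tan\cup\sec}$ be the $q$-grammar with master variables $\{x,y\}$, rule $x_j\mapsto q^j(1+x_jx_{j+1})$, $y_j\mapsto q^jx_jy_{j+1}$ ($j\ge0$), and order DIO, with $q$-derivative $D$. Then for $n\ge3$, every term of $D^n(x_0)$ takes exactly one of the following forms: (i) $x_nx_{n-1}^{\,n}$; (ii) $x_1^{\,n}x_0$; (iii) $x_{j+1}^{\,a}x_j^{\,b}$ with $a,b\le n$, $1\le j\le n-2$, $a+b\le n+1$, and $a+b+n+1$ even.
   Context: $\mathbb{K}$ is a commutative ring with unity and characteristic zero, $q$ an indeterminate. For a set $S$ of master variables, $\mathbb{S}=\{s_i:s\in S,\ i\ge0\}$ is a set of non-commuting variables, $F(\mathbb{S})$ the free group on $\mathbb{S}$, $\mathbb{E}=\mathbb{K}[q][F(\mathbb{S})]$ its group algebra. A rule $R$ assigns to each $s_i$ an element of $\mathbb{E}$. The up-arrow $\uparrow$ is the linear map replacing each letter $s_i^{\pm1}$ of a word by $s_{i+1}^{\pm1}$. DIO is the order that stably reorders the letters of a word according to the position of their underlying variable in the sequence $\dots,x_2,y_2,x_1,y_1,x_0,y_0$ (extended linearly). The $q$-derivative of a $q$-grammar $(S,R,\rho)$ is the $\mathbb{K}[q]$-linear map with $D(w_1\cdots w_n)=\sum_{j=1}^n\rho\big(w_1\cdots w_{j-1}R(w_j)\uparrow(w_{j+1}\cdots w_n)\big)$ for letters $w_j$, $D^0=\mathrm{id}$, $D^k=D\circ D^{k-1}$. Writing an element of $\mathbb{E}$ as $\sum_{w\in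 F(\mathbb{S})}a_ww$, its terms are the words $w$ (including possibly the empty word) with $a_w\ne0$. *)

theory Defs
  imports "HOL-Computational_Algebra.Polynomial"
begin

text \<open>Only positive words occur (all rule values are positive), so words are
  lists of letters (elements of the positive submonoid of the free group).\<close>

datatype var = X | Y

type_synonym letter = "var \<times> nat"
type_synonym word = "letter list"

text \<open>Elements of E = K[q][F(S)]: finitely supported coefficient functions
  word => K[q]; a term of f is a word w with f w \<noteq> 0.\<close>
type_synonym 'a elt = "word \<Rightarrow> 'a poly"

definition mono :: "word \<Rightarrow> 'a::comm_ring_1 elt" where
  "mono w = (\<lambda>z. if z = w then 1 else 0)"

definition lin_ext :: "(word \<Rightarrow> 'a::comm_ring_1 elt) \<Rightarrow> 'a elt \<Rightarrow> 'a elt" where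
  "lin_ext \<phi> f = (\<lambda>z. \<Sum>w\<in>{w. f w \<noteq> 0}. f w * \<phi> w z)"

definition up :: "word \<Rightarrow> word" where
  "up w = map (\<lambda>(s, i). (s, Suc i)) w"

text \<open>DIO order: stable reordering along x_2, y_2, x_1, y_1, x_0, y_0.\<close>
definition dio_key :: "letter \<Rightarrow> int" where
  "dio_key l = - 2 * int (snd l) + (if fst l = X then 0 else 1)"

definition rho :: "word \<Rightarrow> word" where
  "rho w = sort_key dio_key w"

definition rho_elt :: "'a::comm_ring_1 elt \<Rightarrow> 'a elt" where
  "rho_elt f = lin_ext (\<lambda>w. mono (rho w)) f"

definition wmul :: "word \<Rightarrow> 'a::comm_ring_1 elt \<Rightarrow> word \<Rightarrow> 'a elt" where
  "wmul u f v = lin_ext (\<lambda>t. mono (u @ t @ v)) f"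

fun rule :: "letter \<Rightarrow> 'a::comm_ring_1 elt" where
  "rule (X, j) = (\<lambda>z. if z = [] \<or> z = [(X, j), (X, Suc j)] then [:0, 1:] ^ j else 0)"
| "rule (Y, j) = (\<lambda>z. if z = [(X, j), (Y, Suc j)] then [:0, 1:] ^ j else 0)"

definition Dword :: "word \<Rightarrow> 'a::comm_ring_1 elt" where
  "Dword w = (\<lambda>z. \<Sum>j<length w.
      rho_elt (wmul (take j w) (rule (w ! j)) (up (drop (Suc j) w))) z)"

definition Dq :: "'a::comm_ring_1 elt \<Rightarrow> 'a elt" where
  "Dq f = lin_ext Dword f"

end

theory Submission
  imports Defs "HOL-Library.Multiset"
begin

lemma sum_ne0: "sum g A \<noteq> 0 \<Longrightarrow> \<exists>a\<in>A. g a \<noteq> 0"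
  by (metis sum.neutral)

lemma lin_ext_supp: "lin_ext \<phi> f z \<noteq> 0 \<Longrightarrow> \<exists>w. f w \<noteq> 0 \<and> \<phi> w z \<noteq> 0"
  unfolding lin_ext_def by (drule sum_ne0) auto

lemma mono_ne0: "mono w z \<noteq> 0 \<Longrightarrow> z = w"
  by (simp add: mono_def split: if_splits)

lemma rho_elt_supp: "rho_elt f z \<noteq> 0 \<Longrightarrow> \<exists>w. f w \<noteq> 0 \<and> z = rho w"
  unfolding rho_elt_def by (drule lin_ext_supp) (auto dest: mono_ne0)

lemma wmul_supp: "wmul u f v z \<noteq> 0 \<Longrightarrow> \<exists>t. f t \<noteq> 0 \<and> z = u @ t @ v"
  unfolding wmul_def by (drule lin_ext_supp) (auto dest: mono_ne0)

definition rset :: "letter \<Rightarrow> word set" where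
  "rset l = (case l of (X, j) \<Rightarrow> {[], [(X, j), (X, Suc j)]} | (Y, j) \<Rightarrow> {[(X, j), (Y, Suc j)]})"

lemma rule_supp: "rule l z \<noteq> 0 \<Longrightarrow> z \<in> rset l"
proof (cases l)
  case (Pair s j)
  then show "rule l z \<noteq> 0 \<Longrightarrow> z \<in> rset l"
    by (cases s) (auto simp: rset_def split: if_splits)
qed

lemma Dword_supp: "Dword w z \<noteq> 0 \<Longrightarrow>
   \<exists>k r. k < length w \<and> r \<in> rset (w ! k) \<and> z = rho (take k w @ r @ up (drop (Suc k) w))"
  unfolding Dword_def
  by (drule sum_ne0) (auto dest!: rho_elt_supp wmul_supp rule_supp)

lemma Dq_supp: "Dq f z \<noteq> 0 \<Longrightarrow> \<exists>w. f w \<noteq> 0 \<and>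
   (\<exists>k r. k < length w \<and> r \<in> rset (w ! k) \<and> z = rho (take k w @ r @ up (drop (Suc k) w)))"
  unfolding Dq_def by (drule lin_ext_supp) (blast dest: Dword_supp)

abbreviation W :: "nat \<Rightarrow> nat \<Rightarrow> nat \<Rightarrow> word" where
  "W j a b \<equiv> replicate a (X, Suc j) @ replicate b (X, j)"

lemma dio_key_inj: "inj dio_key"
proof (rule injI)
  fix x y :: letter
  assume h: "dio_key x = dio_key y"
  obtain s i t k where xy: "x = (s, i)" "y = (t, k)" by (cases x, cases y)
  show "x = y"
    using h unfolding xy by (cases s; cases t) (auto simp: dio_key_def; presburger)+
qed

lemma sorted_W: "sorted (map dio_key (W j a b))"
  by (auto simp: sorted_append dio_key_def)

lemma rho_W: "mset v = mset (W j a b) \<Longrightarrow> rho v = W j a b"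
  unfolding rho_def
  by (rule sort_key_inj_key_eq) (simp, rule inj_on_subset[OF dio_key_inj], simp, rule sorted_W)

lemma up_app: "up (xs @ ys) = up xs @ up ys" by (simp add: up_def)
lemma up_rep: "up (replicate n (s, i)) = replicate n (s, Suc i)" by (simp add: up_def)

lemma stepW:
  assumes "k < a + b" "r \<in> rset (W j a b ! k)"
    and "v = rho (take k (W j a b) @ r @ up (drop (Suc k) (W j a b)))"
  shows "(\<exists>i<a. v = W (Suc j) (a-i-1) (i+b) \<or> v = W (Suc j) (a-i) (i+1+b))
       \<or> (\<exists>i<b. v = W j (a+b-i-1) i \<or> v = W j (a+b-i) (i+1))"
proof (cases "k < a")
  case True
  have t: "take k (W j a b) = replicate k (X, Suc j)" using True by simp
  have n: "W j a b ! k = (X, Suc j)" using True by (simp add: nth_append)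
  have d: "drop (Suc k) (W j a b) = replicate (a - Suc k) (X, Suc j) @ replicate b (X, j)"
    using True by simp
  have r: "r = [] \<or> r = [(X, Suc j), (X, Suc (Suc j))]" using assms(2) n by (simp add: rset_def)
  show ?thesis
  proof (rule disjI1, rule exI[of _ k], intro conjI True)
    from r show "v = W (Suc j) (a-k-1) (k+b) \<or> v = W (Suc j) (a-k) (k+1+b)"
    proof
      assume "r = []"
      then have "v = W (Suc j) (a-k-1) (k+b)"
        unfolding assms(3) t d up_app up_rep
        by (intro rho_W) (auto simp add: multiset_eq_iff)
      then show ?thesis ..
    next
      assume "r = [(X, Suc j), (X, Suc (Suc j))]"
      moreover have "a - k = Suc (a - Suc k)" using True by simp
      ultimately have "v = W (Suc j) (a-k) (k+1+b)"
        unfolding assms(3) t d up_app up_rep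
        by (intro rho_W) (auto simp add: multiset_eq_iff)
      then show ?thesis ..
    qed
  qed
next
  case False
  define i where "i = k - a"
  have i: "i < b" "k = a + i" using False assms(1) by (auto simp: i_def)
  have t: "take k (W j a b) = replicate a (X, Suc j) @ replicate i (X, j)" using i by simp
  have n: "W j a b ! k = (X, j)" using i by (simp add: nth_append)
  have d: "drop (Suc k) (W j a b) = replicate (b - Suc i) (X, j)"
    using i by simp
  have r: "r = [] \<or> r = [(X, j), (X, Suc j)]" using assms(2) n by (simp add: rset_def)
  show ?thesis
  proof (rule disjI2, rule exI[of _ i], intro conjI i(1))
    from r show "v = W j (a+b-i-1) i \<or> v = W j (a+b-i) (i+1)"
    proof
      assume "r = []"
      moreover have "a + b - i - 1 = a + (b - Suc i)" using i by simp
      ultimately have "v = W j (a+b-i-1) i"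
        unfolding assms(3) t d up_app up_rep
        by (intro rho_W) (auto simp add: multiset_eq_iff)
      then show ?thesis ..
    next
      assume "r = [(X, j), (X, Suc j)]"
      moreover have "a + b - i = a + Suc (b - Suc i)" using i by simp
      ultimately have "v = W j (a+b-i) (i+1)"
        unfolding assms(3) t d up_app up_rep
        by (intro rho_W) (auto simp add: multiset_eq_iff)
      then show ?thesis ..
    qed
  qed
qed


definition Good :: "nat \<Rightarrow> nat \<Rightarrow> nat \<Rightarrow> nat \<Rightarrow> bool" where
  "Good n j a b \<longleftrightarrow> (1 \<le> n \<and> j = n - 1 \<and> a = 1 \<and> b = n) \<or> (j = 0 \<and> a = n \<and> b = 1)
     \<or> (1 \<le> j \<and> j + 2 \<le> n \<and> a \<le> n \<and> b \<le> n \<and> a + b \<le> n + 1 \<and> even (a + b + n + 1))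
     \<or> (n = 1 \<and> a = 0 \<and> b = 0) \<or> (n = 2 \<and> j = 0 \<and> a = 1 \<and> b = 0)"

lemma GA: "1 \<le> n \<Longrightarrow> Good n (n - 1) 1 n" unfolding Good_def by blast
lemma GB: "Good n 0 n 1" unfolding Good_def by blast
lemma GC: "1 \<le> j \<Longrightarrow> j + 2 \<le> n \<Longrightarrow> a \<le> n \<Longrightarrow> b \<le> n \<Longrightarrow> a + b \<le> n + 1
  \<Longrightarrow> even (a + b + n + 1) \<Longrightarrow> Good n j a b" unfolding Good_def by blast
lemma GD: "Good 1 j 0 0" unfolding Good_def by blast
lemma GE: "Good 2 0 1 0" unfolding Good_def by blast

lemma exG: "Good m j a b \<Longrightarrow> v = W j a b \<Longrightarrow> \<exists>j' a' b'. Good m j' a' b' \<and> v = W j' a' b'"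
  by blast

lemma good1:
  assumes "Good n j a b" "i < a"
  shows "\<exists>j' a' b'. Good (Suc n) j' a' b' \<and> W (Suc j) (a-i-1) (i+b) = W j' a' b'"
  using assms(1)[unfolded Good_def]
proof (elim disjE conjE)
  assume h: "1 \<le> n" "j = n - 1" "a = 1" "b = n"
  show ?thesis
  proof (cases "n \<ge> 2")
    case True
    show ?thesis by (rule exG[OF GC[of "n-1" "Suc n" n 0]]) (use h True assms(2) in \<open>auto\<close>)
  next
    case False
    then have "n = 1" using h by simp
    then show ?thesis by (intro exG[of _ 0 1 0]) (use h assms(2) in \<open>auto simp: Good_def\<close>)
  qed
next
  assume h: "j = 0" "a = n" "b = 1"
  show ?thesis
  proof (cases "n \<ge> 2")
    case True
    show ?thesis by (rule exG[OF GC[of 1 "Suc n" "n-i-1" "i+1"]]) (use h True assms(2) in \<open>auto\<close>)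
  next
    case False
    then have "n = 1" using h assms(2) by simp
    then show ?thesis by (intro exG[of _ 0 1 0]) (use h assms(2) in \<open>auto simp: Good_def\<close>)
  qed
next
  assume h: "1 \<le> j" "j + 2 \<le> n" "a \<le> n" "b \<le> n" "a + b \<le> n + 1" "even (a + b + n + 1)"
  show ?thesis by (rule exG[OF GC[of "Suc j" "Suc n" "a-i-1" "i+b"]]) (use h assms(2) in \<open>auto\<close>)
next
  assume "n = 1" "a = 0" "b = 0" then show ?thesis using assms(2) by simp
next
  assume h: "n = 2" "j = 0" "a = 1" "b = 0"
  show ?thesis by (rule exG[of _ 1 0 0]) (use h assms(2) in \<open>auto simp: Good_def\<close>)
qed

lemma good2:
  assumes "Good n j a b" "i < a"
  shows "\<exists>j' a' b'. Good (Suc n) j' a' b' \<and> W (Suc j) (a-i) (i+1+b) = W j' a' b'"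
  using assms(1)[unfolded Good_def]
proof (elim disjE conjE)
  assume h: "1 \<le> n" "j = n - 1" "a = 1" "b = n"
  show ?thesis by (rule exG[OF GA[of "Suc n", simplified]]) (use h assms(2) in \<open>auto\<close>)
next
  assume h: "j = 0" "a = n" "b = 1"
  show ?thesis
  proof (cases "n \<ge> 2")
    case True
    show ?thesis by (rule exG[OF GC[of 1 "Suc n" "n-i" "i+2"]]) (use h True assms(2) in \<open>auto\<close>)
  next
    case False
    then have "n = 1" using h assms(2) by simp
    then show ?thesis by (intro exG[of _ 1 1 2]) (use h assms(2) in \<open>auto simp: Good_def numeral_2_eq_2\<close>)
  qed
next
  assume h: "1 \<le> j" "j + 2 \<le> n" "a \<le> n" "b \<le> n" "a + b \<le> n + 1" "even (a + b + n + 1)"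
  show ?thesis by (rule exG[OF GC[of "Suc j" "Suc n" "a-i" "i+1+b"]]) (use h assms(2) in \<open>auto\<close>)
next
  assume "n = 1" "a = 0" "b = 0" then show ?thesis using assms(2) by simp
next
  assume h: "n = 2" "j = 0" "a = 1" "b = 0"
  show ?thesis by (rule exG[of _ 1 1 1]) (use h assms(2) in \<open>auto simp: Good_def\<close>)
qed

lemma good3:
  assumes "Good n j a b" "i < b"
  shows "\<exists>j' a' b'. Good (Suc n) j' a' b' \<and> W j (a+b-i-1) i = W j' a' b'"
  using assms(1)[unfolded Good_def]
proof (elim disjE conjE)
  assume h: "1 \<le> n" "j = n - 1" "a = 1" "b = n"
  show ?thesis
  proof (cases "n \<ge> 2")
    case True
    show ?thesis by (rule exG[OF GC[of "n-1" "Suc n" "n-i" i]]) (use h True assms(2) in \<open>auto\<close>)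
  next
    case False
    then have "n = 1" using h by simp
    then show ?thesis by (intro exG[of _ 0 1 0]) (use h assms(2) in \<open>auto simp: Good_def\<close>)
  qed
next
  assume h: "j = 0" "a = n" "b = 1"
  then have i0: "i = 0" using assms(2) by simp
  show ?thesis
  proof (cases "n \<ge> 2")
    case True
    show ?thesis by (rule exG[OF GC[of 1 "Suc n" 0 n]]) (use h True i0 in \<open>auto\<close>)
  next
    case False
    then have "n = 0 \<or> n = 1" by auto
    then show ?thesis
    proof
      assume "n = 0"
      then show ?thesis by (intro exG[of _ 0 0 0]) (use h i0 in \<open>auto simp: Good_def\<close>)
    next
      assume "n = 1"
      then show ?thesis by (intro exG[of _ 0 1 0]) (use h i0 in \<open>auto simp: Good_def\<close>)
    qed
  qed
next
  assume h: "1 \<le> j" "j + 2 \<le> n" "a \<le> n" "b \<le> n" "a + b \<le> n + 1" "even (a + b + n + 1)"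
  show ?thesis by (rule exG[OF GC[of j "Suc n" "a+b-i-1" i]]) (use h assms(2) in \<open>auto\<close>)
next
  assume "n = 1" "a = 0" "b = 0" then show ?thesis using assms(2) by simp
next
  assume h: "n = 2" "j = 0" "a = 1" "b = 0"
  then show ?thesis using assms(2) by simp
qed

lemma good4:
  assumes "Good n j a b" "i < b"
  shows "\<exists>j' a' b'. Good (Suc n) j' a' b' \<and> W j (a+b-i) (i+1) = W j' a' b'"
  using assms(1)[unfolded Good_def]
proof (elim disjE conjE)
  assume h: "1 \<le> n" "j = n - 1" "a = 1" "b = n"
  show ?thesis
  proof (cases "n \<ge> 2")
    case True
    show ?thesis by (rule exG[OF GC[of "n-1" "Suc n" "n+1-i" "i+1"]]) (use h True assms(2) in \<open>auto\<close>)
  next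
    case False
    then have "n = 1" using h by simp
    then show ?thesis by (intro exG[of _ 0 2 1]) (use h assms(2) in \<open>auto simp: Good_def numeral_2_eq_2\<close>)
  qed
next
  assume h: "j = 0" "a = n" "b = 1"
  then have i0: "i = 0" using assms(2) by simp
  show ?thesis by (rule exG[OF GB[of "Suc n"]]) (use h i0 in \<open>auto\<close>)
next
  assume h: "1 \<le> j" "j + 2 \<le> n" "a \<le> n" "b \<le> n" "a + b \<le> n + 1" "even (a + b + n + 1)"
  show ?thesis by (rule exG[OF GC[of j "Suc n" "a+b-i" "i+1"]]) (use h assms(2) in \<open>auto\<close>)
next
  assume "n = 1" "a = 0" "b = 0" then show ?thesis using assms(2) by simp
next
  assume h: "n = 2" "j = 0" "a = 1" "b = 0"
  then show ?thesis using assms(2) by simp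
qed

lemma invariant:
  "(Dq ^^ n) (mono [(X, 0)] :: ('a::comm_ring_1) elt) w \<noteq> 0 \<Longrightarrow>
   \<exists>j a b. Good n j a b \<and> w = W j a b"
proof (induction n arbitrary: w)
  case 0
  then have "w = W 0 0 1" by (simp add: mono_def split: if_splits)
  moreover have "Good 0 0 0 1" unfolding Good_def by simp
  ultimately show ?case by blast
next
  case (Suc n)
  from Suc.prems have "Dq ((Dq ^^ n) (mono [(X, 0)] :: 'a elt)) w \<noteq> 0" by simp
  then obtain w' k r where w': "(Dq ^^ n) (mono [(X, 0)] :: 'a elt) w' \<noteq> 0"
    and k: "k < length w'" "r \<in> rset (w' ! k)" "w = rho (take k w' @ r @ up (drop (Suc k) w'))"
    by (blast dest: Dq_supp)
  from Suc.IH[OF w'] obtain j a b where g: "Good n j a b" and e: "w' = W j a b" by blast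
  have "k < a + b" using k(1) e by simp
  from stepW[OF this k(2)[unfolded e] k(3)[unfolded e]]
  show ?case
    using good1[OF g] good2[OF g] good3[OF g] good4[OF g] by metis
qed

theorem proposition3p8:
  fixes n :: nat and w :: word
  assumes "n \<ge> 3"
    and "(Dq ^^ n) (mono [(X, 0)] :: ('a::{comm_ring_1, ring_char_0}) elt) w \<noteq> 0"
  shows "let P1 = (w = [(X, n)] @ replicate n (X, n - 1));
             P2 = (w = replicate n (X, 1) @ [(X, 0)]);
             P3 = (\<exists>j a b. w = replicate a (X, Suc j) @ replicate b (X, j)
                     \<and> a \<le> n \<and> b \<le> n \<and> 1 \<le> j \<and> j \<le> n - 2
                     \<and> a + b \<le> n + 1 \<and> even (a + b + n + 1))
         in (P1 \<and> \<not> P2 \<and> \<not> P3) \<or> (\<not> P1 \<and> P2 \<and> \<not> P3) \<or> (\<not> P1 \<and> \<not> P2 \<and> P3)"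
proof -
  from invariant[OF assms(2)] obtain j a b where g: "Good n j a b" and e: "w = W j a b" by blast
  define P1 where "P1 = (w = [(X, n)] @ replicate n (X, n - 1))"
  define P2 where "P2 = (w = replicate n (X, 1) @ [(X, 0)])"
  define P3 where "P3 = (\<exists>j a b. w = replicate a (X, Suc j) @ replicate b (X, j)
                     \<and> a \<le> n \<and> b \<le> n \<and> 1 \<le> j \<and> j \<le> n - 2
                     \<and> a + b \<le> n + 1 \<and> even (a + b + n + 1))"
  have "P1 \<or> P2 \<or> P3"
    using g[unfolded Good_def]
  proof (elim disjE conjE)
    assume h: "1 \<le> n" "j = n - 1" "a = 1" "b = n"
    then have "Suc j = n" by simp
    then have P1 unfolding P1_def e using h by simp
    then show ?thesis by blast
  next
    assume "j = 0" "a = n" "b = 1"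
    then have P2 unfolding P2_def e by simp
    then show ?thesis by blast
  next
    assume h: "1 \<le> j" "j + 2 \<le> n" "a \<le> n" "b \<le> n" "a + b \<le> n + 1" "even (a + b + n + 1)"
    then have P3 unfolding P3_def e
      by (intro exI[of _ j] exI[of _ a] exI[of _ b]) auto
    then show ?thesis by blast
  qed (use assms(1) in auto)
  moreover have "\<not> (P1 \<and> P2)"
  proof
    assume p: "P1 \<and> P2"
    have "hd w = (X, n)" using p unfolding P1_def by simp
    moreover have "hd w = (X, 1)" using p assms(1) unfolding P2_def by (simp add: hd_append)
    ultimately show False using assms(1) by simp
  qed
  moreover have "\<not> (P1 \<and> P3)"
  proof
    assume "P1 \<and> P3"
    then have "(X, n) \<in> set w" unfolding P1_def by simp
    moreover from \<open>P1 \<and> P3\<close> obtain j' a' b' where "w = W j' a' b'" "j' \<le> n - 2"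
      unfolding P3_def by blast
    ultimately show False using assms(1) by (auto split: if_splits)
  qed
  moreover have "\<not> (P2 \<and> P3)"
  proof
    assume "P2 \<and> P3"
    then have "(X, 0) \<in> set w" unfolding P2_def by simp
    moreover from \<open>P2 \<and> P3\<close> obtain j' a' b' where "w = W j' a' b'" "1 \<le> j'"
      unfolding P3_def by blast
    ultimately show False by (auto split: if_splits)
  qed
  ultimately show ?thesis unfolding Let_def P1_def[symmetric] P2_def[symmetric] P3_def[symmetric]
    by blast
qed

end
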